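(* Let $r\ge4$ be even. For any $n\ge r-1$ and $A>0$, there exists $f\in C^r[-1,1]$ with $f\le0$ on $[-1,0]$ and $f\ge0$ on $[0,1]$, such that every algebraic polynomial $P_n$ of degree $\le n$ with $P_n\le0$ on $[-1,0]$, $P_n\ge0$ on $[0,1]$ and $P_n^{(i)}(0)=f^{(i)}(0)$ for $0\le i\le r-1$ obeys $$\|f-P_n\|>A\,\|f^{(r)}\|.$$
   Context: $\|\cdot\|$ is the sup norm on $[-1,1]$. *)

theory Defs
  imports "HOL-Analysis.Analysis" "HOL-Computational_Algebra.Polynomial"
begin

definition sup_norm :: "(real \<Rightarrow> real) \<Rightarrow> real" where
  "sup_norm g = (SUP x\<in>{-1..1}. \<bar>g x\<bar>)"

text \<open>D is the family of derivatives D 0 = f, D 1 = f', ..., D r = f^(r) of a function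
  f in C^r[-1,1]: each D k (k \<le> r) is continuous on [-1,1], and D (k+1) is the derivative
  of D k on [-1,1] (one-sided at the endpoints).\<close>
definition Cr_derivs :: "nat \<Rightarrow> (nat \<Rightarrow> real \<Rightarrow> real) \<Rightarrow> bool" where
  "Cr_derivs r D \<longleftrightarrow>
     (\<forall>k\<le>r. continuous_on {-1..1} (D k)) \<and>
     (\<forall>k<r. \<forall>x\<in>{-1..1}. (D k has_real_derivative D (Suc k) x) (at x within {-1..1}))"

end

theory Submission
  imports Defs
begin


definition pp :: "nat \<Rightarrow> real \<Rightarrow> real \<Rightarrow> real" where
  "pp m a x = (max (x - a) 0) ^ m"

lemma pp_cont: "continuous_on S (pp m a)"
  unfolding pp_def by (intro continuous_intros)

lemma pp_deriv:
  assumes "m \<ge> 1"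
  shows "(pp (Suc m) a has_real_derivative (Suc m) * pp m a x) (at x)"
proof (cases "x < a")
  case True
  have ev: "eventually (\<lambda>y. pp (Suc m) a y = (\<lambda>_. 0) y) (nhds x)"
    using eventually_nhds_in_open[of "{..<a}" x] True
    by (auto simp: pp_def elim!: eventually_mono)
  have "((\<lambda>_. 0::real) has_real_derivative 0) (at x)" by simp
  then show ?thesis using True assms
    by (subst DERIV_cong_ev[OF refl ev]) (auto simp: pp_def zero_power)
next
  case False
  show ?thesis
  proof (cases "x > a")
    case True
    have ev: "eventually (\<lambda>y. pp (Suc m) a y = (\<lambda>y. (y - a) ^ Suc m) y) (nhds x)"
      using eventually_nhds_in_open[of "{a<..}" x] True
      by (auto simp: pp_def elim!: eventually_mono)
    have "((\<lambda>y. (y - a) ^ Suc m) has_real_derivative (Suc m) * (x - a) ^ m) (at x)"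
      using assms by (auto intro!: derivative_eq_intros) (cases m, auto simp: algebra_simps)
    then show ?thesis using True
      by (subst DERIV_cong_ev[OF refl ev]) (auto simp: pp_def zero_power)
  next
    case False
    with \<open>\<not> x < a\<close> have xa: "x = a" by simp
    have lim: "((\<lambda>y. \<bar>y - a\<bar> ^ m) \<longlongrightarrow> 0) (at a)"
    proof -
      have "((\<lambda>y. \<bar>y - a\<bar> ^ m) \<longlongrightarrow> \<bar>a - a\<bar> ^ m) (at a)"
        by (intro tendsto_intros)
      then show ?thesis using assms by (simp add: zero_power)
    qed
    have "((\<lambda>y. (pp (Suc m) a y - pp (Suc m) a a) / (y - a)) \<longlongrightarrow> 0) (at a)"
    proof (rule Lim_null_comparison[OF _ lim])
      show "\<forall>\<^sub>F y in at a. norm ((pp (Suc m) a y - pp (Suc m) a a) / (y - a)) \<le> \<bar>y - a\<bar> ^ m"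
      proof (rule always_eventually, intro allI)
        fix y :: real
        have "\<bar>max (y - a) 0\<bar> \<le> \<bar>y - a\<bar>" by auto
        then have "\<bar>max (y - a) 0\<bar> ^ Suc m \<le> \<bar>y - a\<bar> ^ Suc m"
          by (intro power_mono) auto
        then show "norm ((pp (Suc m) a y - pp (Suc m) a a) / (y - a)) \<le> \<bar>y - a\<bar> ^ m"
          by (cases "y = a") (auto simp: pp_def divide_simps power_abs abs_mult mult.commute)
      qed
    qed
    then show ?thesis using xa assms
      by (auto simp: has_field_derivative_iff pp_def zero_power)
  qed
qed



lemma rigid:
  fixes ts :: "real list"
  assumes "distinct ts"
  shows "\<exists>K\<ge>0. \<forall>Q B. degree Q < length ts \<longrightarrow> (\<forall>t\<in>set ts. \<bar>poly Q t\<bar> \<le> B)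
            \<longrightarrow> (\<forall>i. \<bar>coeff Q i\<bar> \<le> K * B)"
  using assms
proof (induction ts)
  case Nil
  then show ?case by auto
next
  case (Cons t ts)
  then obtain K' where K': "K' \<ge> 0" and
    IH: "\<And>Q B. degree Q < length ts \<Longrightarrow> (\<forall>t\<in>set ts. \<bar>poly Q t\<bar> \<le> B)
            \<Longrightarrow> (\<forall>i. \<bar>coeff Q i\<bar> \<le> K' * B)" by auto
  define g where "g = Min (insert 1 ((\<lambda>s. \<bar>s - t\<bar>) ` set ts))"
  have gpos: "g > 0" unfolding g_def using Cons.prems by (auto simp: Min_gr_iff)
  have gle: "\<And>s. s \<in> set ts \<Longrightarrow> g \<le> \<bar>s - t\<bar>" unfolding g_def by auto
  define K where "K = 1 + (1 + \<bar>t\<bar>) * K' * 2 / g"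
  have K1: "K \<ge> 1" unfolding K_def using K' gpos by auto
  show ?case
  proof (intro exI[of _ K] conjI allI impI)
    show "K \<ge> 0" using K1 by simp
    fix Q B i
    assume dQ: "degree Q < length (t # ts)" and hB: "\<forall>s\<in>set (t # ts). \<bar>poly Q s\<bar> \<le> B"
    have B0: "B \<ge> 0" using hB by (meson abs_ge_zero list.set_intros(1) order_trans)
    define c where "c = poly Q t"
    define Q1 where "Q1 = synthetic_div Q t"
    have decomp: "Q = [:-t, 1:] * Q1 + [:c:]"
      unfolding Q1_def c_def by (rule synthetic_div_correct'[symmetric])
    have cB: "\<bar>c\<bar> \<le> B" using hB c_def by auto
    show "\<bar>coeff Q i\<bar> \<le> K * B"
    proof (cases "degree Q = 0")
      case True
      then obtain a where "Q = [:a:]" by (metis degree_eq_zeroE)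
      then have "\<bar>coeff Q i\<bar> \<le> B" using cB c_def by (cases i) auto
      also have "B \<le> K * B" using K1 B0 by (simp add: mult_le_cancel_right1)
      finally show ?thesis .
    next
      case False
      have dQ1: "degree Q1 < length ts" unfolding Q1_def degree_synthetic_div using dQ False by auto
      have "\<forall>s\<in>set ts. \<bar>poly Q1 s\<bar> \<le> 2 * B / g"
      proof
        fix s assume s: "s \<in> set ts"
        have st: "s \<noteq> t" using Cons.prems s by auto
        have "poly Q s = (s - t) * poly Q1 s + c"
          by (subst decomp) (simp add: algebra_simps)
        then have "poly Q1 s = (poly Q s - c) / (s - t)" using st by (simp add: field_simps)
        then have "\<bar>poly Q1 s\<bar> = \<bar>poly Q s - c\<bar> / \<bar>s - t\<bar>" by (simp add: abs_divide)
        also have "\<dots> \<le> (2 * B) / g"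
        proof (rule frac_le)
          show "\<bar>poly Q s - c\<bar> \<le> 2 * B" using hB s cB by (auto intro: order_trans[OF abs_triangle_ineq4])
        qed (use gpos gle[OF s] B0 in auto)
        finally show "\<bar>poly Q1 s\<bar> \<le> 2 * B / g" .
      qed
      from IH[OF dQ1 this] have c1: "\<And>j. \<bar>coeff Q1 j\<bar> \<le> K' * (2 * B / g)" by auto
      have "[:-t, 1:] * Q1 = smult (-t) Q1 + pCons 0 Q1" by simp
      then have cQ: "coeff Q i = - t * coeff Q1 i + (case i of 0 \<Rightarrow> 0 | Suc j \<Rightarrow> coeff Q1 j) + (if i = 0 then c else 0)"
        by (subst decomp) (auto simp: coeff_pCons split: nat.splits)
      have b2: "\<bar>case i of 0 \<Rightarrow> 0 | Suc j \<Rightarrow> coeff Q1 j\<bar> \<le> K' * (2 * B / g)"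
        using c1 K' gpos B0 by (cases i) auto
      have b3: "\<bar>if i = 0 then c else 0\<bar> \<le> B" using cB B0 by auto
      have b1: "\<bar>- t * coeff Q1 i\<bar> \<le> \<bar>t\<bar> * (K' * (2 * B / g))"
        unfolding abs_mult abs_minus by (rule mult_left_mono[OF c1]) simp
      have "\<bar>coeff Q i\<bar> \<le> \<bar>t\<bar> * (K' * (2 * B / g)) + K' * (2 * B / g) + B"
        unfolding cQ using b1 b2 b3 by (smt (verit))
      also have "\<dots> = K * B" unfolding K_def using gpos by (simp add: field_simps)
      finally show ?thesis .
    qed
  qed
qed



definition Tp :: "nat \<Rightarrow> real \<Rightarrow> real poly" where
  "Tp r s = monom (s^3/2^r) (r-3) - monom (s/2^r) (r-1)"

definition pk :: "nat \<Rightarrow> real \<Rightarrow> nat \<Rightarrow> real \<Rightarrow> real" where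
  "pk r \<sigma> k x = fact (r+1) / fact (r+1-k) * (pp (r+1-k) \<sigma> x - pp (r+1-k) (2*\<sigma>) x) / \<sigma>"

definition DD :: "nat \<Rightarrow> real \<Rightarrow> nat \<Rightarrow> real \<Rightarrow> real" where
  "DD r s k x = poly ((pderiv^^k) (Tp r s)) x + (pk r (s/4) k x - (-1)^k * pk r (s/4) k (-x))"

lemma pp_cont' [continuous_intros]: "continuous_on S f \<Longrightarrow> continuous_on S (\<lambda>x. pp m a (f x))"
  unfolding pp_def by (intro continuous_intros)

lemma pk_cont: "continuous_on S (\<lambda>x. pk r \<sigma> k (f x))" if "continuous_on S f"
  unfolding pk_def divide_inverse using that by (intro continuous_intros) 

lemma pk_deriv:
  assumes "k < r"
  shows "((\<lambda>x. pk r \<sigma> k x) has_real_derivative pk r \<sigma> (Suc k) x) (at x)"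
proof -
  obtain m where m: "r - k = m" "m \<ge> 1" using assms by auto
  have e1: "r + 1 - k = Suc m" using m assms by auto
  have e2: "r + 1 - Suc k = m" using m assms by auto
  have "((\<lambda>x. fact (r+1) / fact (Suc m) * (pp (Suc m) \<sigma> x - pp (Suc m) (2*\<sigma>) x) / \<sigma>)
     has_real_derivative fact (r+1) / fact (Suc m) * ((Suc m) * pp m \<sigma> x - (Suc m) * pp m (2*\<sigma>) x) / \<sigma>) (at x)"
    by (intro DERIV_cdivide DERIV_cmult DERIV_diff pp_deriv m)
  moreover have "fact (r+1) / fact (Suc m) * ((Suc m) * pp m \<sigma> x - (Suc m) * pp m (2*\<sigma>) x) / \<sigma>
      = fact (r+1) / fact m * (pp m \<sigma> x - pp m (2*\<sigma>) x) / \<sigma>"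
  proof -
    have f: "(fact (Suc m)::real) = real (Suc m) * fact m" by (simp del: of_nat_Suc)
    have "real (Suc m) > 0" by simp
    then show ?thesis unfolding f by (cases "\<sigma> = 0") (simp_all add: field_simps del: of_nat_Suc)
  qed
  ultimately show ?thesis unfolding pk_def e1 e2 by simp
qed

lemma pk_deriv_neg:
  assumes "k < r"
  shows "((\<lambda>x. pk r \<sigma> k (-x)) has_real_derivative - pk r \<sigma> (Suc k) (-x)) (at x)"
proof -
  have "((\<lambda>x. pk r \<sigma> k x) has_real_derivative pk r \<sigma> (Suc k) (-x)) (at (-x))"
    by (rule pk_deriv[OF assms])
  from DERIV_chain2[OF this DERIV_minus[OF DERIV_ident]] show ?thesis by simp
qed

lemma DD_Cr:
  assumes "r \<ge> 1"
  shows "Cr_derivs r (DD r s)"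
  unfolding Cr_derivs_def
proof (intro conjI allI impI ballI)
  fix k assume "k \<le> r"
  show "continuous_on {-1..1} (DD r s k)"
    unfolding DD_def by (intro continuous_intros pk_cont) 
next
  fix k x assume k: "k < r" and x: "x \<in> {-1..(1::real)}"
  have "((\<lambda>x. DD r s k x) has_real_derivative DD r s (Suc k) x) (at x)"
    unfolding DD_def
    by (rule derivative_eq_intros pk_deriv[OF k] pk_deriv_neg[OF k] refl)+ simp
  then show "(DD r s k has_real_derivative DD r s (Suc k) x) (at x within {-1..1})"
    by (rule has_field_derivative_at_within)
qed



lemma poly_Tp: "poly (Tp r s) x = s^3/2^r * x^(r-3) - s/2^r * x^(r-1)"
  by (simp add: Tp_def poly_monom)

lemma Tp_odd:
  assumes "even r" "r \<ge> 4"
  shows "poly (Tp r s) (-x) = - poly (Tp r s) x"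
proof -
  have "odd (r-3)" "odd (r-1)" using assms by auto
  then show ?thesis unfolding poly_Tp by (simp add: power_minus_odd)
qed

lemma pp_zero: "x \<le> a \<Longrightarrow> m \<ge> 1 \<Longrightarrow> pp m a x = 0"
  by (simp add: pp_def zero_power)

lemma pk_zero:
  assumes "\<sigma> > 0" "y \<le> \<sigma>" "k \<le> r"
  shows "pk r \<sigma> k y = 0"
  using assms by (simp add: pk_def pp_zero)

lemma pp_mono_a: "a \<le> b \<Longrightarrow> pp m b x \<le> pp m a x"
  unfolding pp_def by (intro power_mono) auto

lemma pp_nonneg: "pp m a x \<ge> 0"
  unfolding pp_def by simp

lemma pow_diff_ge:
  fixes a b :: real
  assumes "0 \<le> b" "b \<le> a"
  shows "a^(Suc m) - b^(Suc m) \<ge> (a - b) * b^m"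
proof -
  have "a * b^m \<le> a * a^m" using assms by (intro mult_left_mono power_mono) auto
  then show ?thesis by (simp add: algebra_simps)
qed

lemma pow_diff_le:
  fixes a b :: real
  assumes "0 \<le> b" "b \<le> a" "a \<le> 1"
  shows "a^m - b^m \<le> m * (a - b)"
proof (induction m)
  case 0 then show ?case by simp
next
  case (Suc m)
  have "a^(Suc m) - b^(Suc m) = a * (a^m - b^m) + b^m * (a - b)" by (simp add: algebra_simps)
  also have "\<dots> \<le> 1 * (m * (a - b)) + 1 * (a - b)"
  proof (rule add_mono)
    have "a^m - b^m \<ge> 0" using assms by (simp add: power_mono)
    then show "a * (a^m - b^m) \<le> 1 * (m * (a - b))" using Suc assms by (intro mult_mono) auto
    have "b^m \<le> 1" using assms by (simp add: power_le_one)
    then show "b^m * (a - b) \<le> 1 * (a - b)" using assms by (intro mult_right_mono) auto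
  qed
  finally show ?case by (simp add: algebra_simps)
qed

lemma f_nonneg:
  assumes r: "even r" "r \<ge> 4" and s: "0 < s" "s \<le> 1" and x: "0 \<le> x" "x \<le> 1"
  shows "DD r s 0 x \<ge> 0"
proof -
  define \<sigma> where "\<sigma> = s/4"
  have sp: "\<sigma> > 0" using s by (simp add: \<sigma>_def)
  have neg0: "pk r \<sigma> 0 (-x) = 0" using sp x by (intro pk_zero) auto
  have pk0: "pk r \<sigma> 0 x = (pp (r+1) \<sigma> x - pp (r+1) (2*\<sigma>) x) / \<sigma>"
    by (simp add: pk_def)
  have pkn: "pk r \<sigma> 0 x \<ge> 0" unfolding pk0 using sp pp_mono_a[of \<sigma> "2*\<sigma>" "r+1" x]
    by simp
  have D: "DD r s 0 x = poly (Tp r s) x + pk r \<sigma> 0 x"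
    by (simp add: DD_def \<sigma>_def[symmetric] neg0)
  have xr: "x^(r-1) = x^(r-3) * x^2"
  proof -
    have "r - 1 = (r-3) + 2" using r by simp
    then show ?thesis by (metis power_add)
  qed
  show ?thesis
  proof (cases "x \<le> s")
    case True
    have "x^2 \<le> s^2" using True x by (intro power_mono) auto
    then have "s/2^r * x^2 \<le> s/2^r * s^2" using s by (intro mult_left_mono) auto
    then have "s^3/2^r - s/2^r * x^2 \<ge> 0" by (simp add: power3_eq_cube power2_eq_square)
    moreover have "poly (Tp r s) x = x^(r-3) * (s^3/2^r - s/2^r * x^2)"
      unfolding poly_Tp xr by (simp add: algebra_simps)
    ultimately have "poly (Tp r s) x \<ge> 0" using x by simp
    then show ?thesis unfolding D using pkn by simp
  next
    case False
    define a where "a = x - \<sigma>"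
    define b where "b = x - 2*\<sigma>"
    have b2: "b \<ge> x/2" using False unfolding b_def \<sigma>_def by simp
    have bp: "b \<ge> 0" using b2 x by simp
    have ab: "a - b = \<sigma>" "b \<le> a" unfolding a_def b_def using sp by auto
    have a0: "x - \<sigma> \<ge> 0" using bp sp unfolding b_def by simp
    have "pp (r+1) \<sigma> x = a^(Suc r)" unfolding pp_def a_def using a0 by simp
    moreover have "pp (r+1) (2*\<sigma>) x = b^(Suc r)" unfolding pp_def b_def using bp by (simp add: b_def max_def)
    ultimately have "pk r \<sigma> 0 x \<ge> (a - b) * b^r / \<sigma>" unfolding pk0
      using pow_diff_ge[OF bp ab(2), of r] sp by (intro divide_right_mono) auto
    then have pkb: "pk r \<sigma> 0 x \<ge> b^r" using ab sp by simp
    have "b^r \<ge> (x/2)^r" using b2 x by (intro power_mono) auto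
    then have pkx: "pk r \<sigma> 0 x \<ge> x^r / 2^r" using pkb by (simp add: power_divide)
    have "x^r = x^(r-1) * x" using r by (metis One_nat_def Suc_pred' not_gr0 power_Suc2 not_numeral_le_zero)
    then have "x^r/2^r - s/2^r * x^(r-1) = x^(r-1) * (x - s) / 2^r" by (simp add: field_simps)
    also have "\<dots> \<ge> 0" using False x by simp
    finally have "x^r/2^r - s/2^r * x^(r-1) \<ge> 0" .
    moreover have "s^3/2^r * x^(r-3) \<ge> 0" using s x by simp
    ultimately show ?thesis unfolding D poly_Tp using pkx by linarith
  qed
qed

lemma f_odd:
  assumes r: "even r" "r \<ge> 4"
  shows "DD r s 0 (-x) = - DD r s 0 x"
  using Tp_odd[OF r] by (simp add: DD_def)



lemma Tp_high: "r \<ge> 1 \<Longrightarrow> (pderiv^^r) (Tp r s) = 0"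
  by (rule poly_eqI) (auto simp: coeff_higher_pderiv Tp_def coeff_monom)

lemma Dr_bound:
  assumes "even r" "r \<ge> 4" "s > 0"
  shows "\<bar>DD r s r x\<bar> \<le> fact (r+1)"
proof -
  define \<sigma> where "\<sigma> = s/4"
  have sp: "\<sigma> > 0" using assms by (simp add: \<sigma>_def)
  have pkb: "0 \<le> pk r \<sigma> r y \<and> pk r \<sigma> r y \<le> fact (r+1)" for y
  proof -
    define F where "F = (fact (r+1)::real)"
    define q where "q = (pp 1 \<sigma> y - pp 1 (2*\<sigma>) y) / \<sigma>"
    have e: "pk r \<sigma> r y = F * q"
      by (simp add: pk_def F_def q_def)
    have q: "0 \<le> q" "q \<le> 1"
      using sp by (auto simp: q_def pp_def max_def divide_simps)
    have F: "F \<ge> 0" by (simp add: F_def)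
    have "F * q \<le> F * 1" using F q by (intro mult_left_mono) auto
    then show ?thesis unfolding e F_def[symmetric] using F q by simp
  qed
  have "DD r s r x = pk r \<sigma> r x - pk r \<sigma> r (-x)"
    using assms by (simp add: DD_def Tp_high \<sigma>_def[symmetric])
  then show ?thesis using pkb[of x] pkb[of "-x"] by linarith
qed

lemma node_bound:
  assumes "even r" "r \<ge> 4" "s > 0" "s \<le> 1" "1/2 \<le> t" "t \<le> 1"
  shows "\<bar>DD r s 0 t\<bar> \<le> r + 3"
proof -
  define \<sigma> where "\<sigma> = s/4"
  have sp: "\<sigma> > 0" using assms by (simp add: \<sigma>_def)
  have neg0: "pk r \<sigma> 0 (-t) = 0" using sp assms by (intro pk_zero) auto
  define a where "a = max (t - \<sigma>) 0"
  define b where "b = max (t - 2*\<sigma>) 0"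
  have ab: "0 \<le> b" "b \<le> a" "a \<le> 1" "a - b \<le> \<sigma>" unfolding a_def b_def using sp assms by auto
  have pk0: "pk r \<sigma> 0 t = (a^(r+1) - b^(r+1)) / \<sigma>"
    by (simp add: pk_def pp_def a_def b_def)
  have "a^(r+1) - b^(r+1) \<le> real (r+1) * (a - b)" by (rule pow_diff_le[OF ab(1-3)])
  also have "\<dots> \<le> real (r+1) * \<sigma>" using ab by (intro mult_left_mono) auto
  finally have "pk r \<sigma> 0 t \<le> r + 1" unfolding pk0 using sp by (simp add: divide_simps)
  moreover have "pk r \<sigma> 0 t \<ge> 0"
  proof -
    have "b^(r+1) \<le> a^(r+1)" using ab by (intro power_mono) auto
    then show ?thesis unfolding pk0 using sp by simp
  qed
  moreover have "\<bar>poly (Tp r s) t\<bar> \<le> 2"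
  proof -
    have p2: "(1::real) \<le> 2^r" by simp
    have s3: "s^3 \<le> 1" using assms by (simp add: power_le_one)
    have c1: "0 \<le> s^3/2^r" "s^3/2^r \<le> 1" using s3 p2 assms by (auto simp: divide_simps intro: order_trans[OF s3 p2])
    have c2: "0 \<le> s/2^r" "s/2^r \<le> 1" using p2 assms by (auto simp: divide_simps intro: order_trans[OF _ p2])
    have t1: "0 \<le> t^(r-3)" "t^(r-3) \<le> 1" using assms by (auto simp: power_le_one)
    have t2: "0 \<le> t^(r-1)" "t^(r-1) \<le> 1" using assms by (auto simp: power_le_one)
    have "s^3/2^r * t^(r-3) \<le> 1" using c1 t1 by (intro mult_le_one) auto
    moreover have "s/2^r * t^(r-1) \<le> 1" using c2 t2 by (intro mult_le_one) auto
    moreover have "0 \<le> s^3/2^r * t^(r-3)" "0 \<le> s/2^r * t^(r-1)"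
      using mult_nonneg_nonneg[OF c1(1) t1(1)] mult_nonneg_nonneg[OF c2(1) t2(1)] by auto
    ultimately show ?thesis unfolding poly_Tp by linarith
  qed
  moreover have "DD r s 0 t = poly (Tp r s) t + pk r \<sigma> 0 t"
    by (simp add: DD_def \<sigma>_def[symmetric] neg0)
  ultimately show ?thesis by linarith
qed

lemma higher_pderiv_at0: "poly ((pderiv ^^ i) P) 0 = fact i * coeff (P::real poly) i"
  by (simp add: poly_0_coeff_0 coeff_higher_pderiv pochhammer_fact)

lemma DD_at0:
  assumes "i < r" "s > 0"
  shows "DD r s i 0 = poly ((pderiv^^i) (Tp r s)) 0"
  using assms by (simp add: DD_def pk_zero)

lemma sup_norm_ge:
  assumes "continuous_on {-1..1} g" "t \<in> {-1..1}"
  shows "\<bar>g t\<bar> \<le> sup_norm g"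
proof -
  have "compact ((\<lambda>x. \<bar>g x\<bar>) ` {-1..1})"
    using assms by (intro compact_continuous_image continuous_intros) auto
  then have "bdd_above ((\<lambda>x. \<bar>g x\<bar>) ` {-1..1})"
    by (meson bounded_imp_bdd_above compact_imp_bounded)
  then show ?thesis unfolding sup_norm_def using assms by (intro cSUP_upper) auto
qed

lemma sup_norm_le:
  assumes "\<And>x. x \<in> {-1..1} \<Longrightarrow> \<bar>g x\<bar> \<le> c"
  shows "sup_norm g \<le> c"
  unfolding sup_norm_def using assms by (intro cSUP_least) auto



lemma poly_sum_n:
  fixes p :: "real poly"
  assumes "degree p \<le> n"
  shows "poly p x = (\<Sum>i\<le>n. coeff p i * x^i)"
proof -
  have "poly p x = (\<Sum>i\<le>degree p. coeff p i * x^i)" by (rule poly_altdef)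
  also have "\<dots> = (\<Sum>i\<le>n. coeff p i * x^i)"
    by (rule sum.mono_neutral_left) (use assms in \<open>auto simp: coeff_eq_0\<close>)
  finally show ?thesis .
qed

lemma degree_Tp: "degree (Tp r s) \<le> r - 1"
proof -
  have "degree (monom (s^3/2^r) (r-3)) \<le> r - 1" by (rule order_trans[OF degree_monom_le]) simp
  moreover have "degree (monom (s/2^r) (r-1)) \<le> r - 1" by (rule degree_monom_le)
  ultimately show ?thesis unfolding Tp_def by (meson degree_diff_le)
qed

lemma coeff_Tp_high: "r \<ge> 4 \<Longrightarrow> i \<ge> r \<Longrightarrow> coeff (Tp r s) i = 0"
  by (auto simp: Tp_def coeff_monom)

theorem lemma3p14:
  fixes r n :: nat and A :: real
  assumes "even r" "r \<ge> 4" "n \<ge> r - 1" "A > 0"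
  shows "\<exists>f D. Cr_derivs r D \<and> D 0 = f \<and>
           (\<forall>x\<in>{-1..0}. f x \<le> 0) \<and> (\<forall>x\<in>{0..1}. f x \<ge> 0) \<and>
           (\<forall>P :: real poly. degree P \<le> n \<and>
               (\<forall>x\<in>{-1..0}. poly P x \<le> 0) \<and> (\<forall>x\<in>{0..1}. poly P x \<ge> 0) \<and>
               (\<forall>i<r. poly ((pderiv ^^ i) P) 0 = D i 0)
             \<longrightarrow> sup_norm (\<lambda>x. f x - poly P x) > A * sup_norm (D r))"
proof -
  note r = assms(1,2)
  define ts where "ts = map (\<lambda>j. 1/2 + real j / (2 * (real n + 1))) [0..<n+1]"
  have "inj_on (\<lambda>j. 1/2 + real j / (2 * (real n + 1))) {0..<n+1}"
    by (rule inj_onI) (simp add: divide_simps)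
  then have dts: "distinct ts" unfolding ts_def by (auto simp: distinct_map simp del: upt_Suc)
  have lts: "length ts = n + 1" unfolding ts_def by simp
  have tsr: "\<And>t. t \<in> set ts \<Longrightarrow> 1/2 \<le> t \<and> t \<le> 1"
  proof -
    fix t assume "t \<in> set ts"
    then obtain j where j: "j < n + 1" "t = 1/2 + real j / (2 * (real n + 1))" unfolding ts_def by auto
    have "real j / (2 * (real n + 1)) \<le> 1/2" using j(1) by (simp add: divide_simps)
    moreover have "real j / (2 * (real n + 1)) \<ge> 0" by simp
    ultimately show "1/2 \<le> t \<and> t \<le> 1" using j(2) by linarith
  qed
  obtain K where K0: "K \<ge> 0" and
    KR: "\<And>Q B. degree Q < length ts \<Longrightarrow> (\<forall>t\<in>set ts. \<bar>poly Q t\<bar> \<le> B) \<Longrightarrow> (\<forall>i. \<bar>coeff Q i\<bar> \<le> K * B)"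
    using rigid[OF dts] by blast
  define B0 where "B0 = real r + 3 + A * fact (r+1)"
  have B0p: "B0 > 0" unfolding B0_def using assms by (simp add: add_pos_nonneg)
  define L where "L = K * B0"
  have L0: "L \<ge> 0" unfolding L_def using K0 B0p by simp
  define s where "s = 1 / (2^(r+5) * (real n + 1) * (L + 1))"
  have den: "2^(r+5) * (real n + 1) * (L + 1) \<ge> 4"
  proof -
    have "(4::real) \<le> 2^(r+5)" using power_increasing[of 2 "r+5" "2::real"] by simp
    moreover have "1 * 1 \<le> (real n + 1) * (L + 1)" by (rule mult_mono) (use L0 in auto)
    ultimately have "4 * 1 \<le> 2^(r+5) * ((real n + 1) * (L + 1))" by (intro mult_mono) auto
    then show ?thesis by (simp add: mult.assoc)
  qed
  have sp: "s > 0" unfolding s_def using den by simp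
  have s4: "s \<le> 1/4" unfolding s_def using den by (simp add: divide_simps)
  have key: "2^(r+5) * (real n + 1) * L * s < 1"
  proof -
    define X where "X = (2::real)^(r+5) * (real n + 1)"
    have Xp: "X > 0" unfolding X_def by simp
    have "2^(r+5) * (real n + 1) * L * s = X * L * (1 / (X * (L + 1)))" unfolding s_def X_def by simp
    also have "\<dots> = (X * L) / (X * (L + 1))" by simp
    also have "\<dots> = L / (L + 1)" using Xp by (rule mult_divide_mult_cancel_left[OF less_imp_neq[symmetric]])
    finally have "2^(r+5) * (real n + 1) * L * s = L / (L + 1)" .
    also have "\<dots> < 1" using L0 by simp
    finally show ?thesis .
  qed
  define D where "D = DD r s"
  define f where "f = D 0"
  have Cr: "Cr_derivs r D" unfolding D_def using r by (intro DD_Cr) auto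
  have fpos: "\<forall>x\<in>{0..1}. f x \<ge> 0" unfolding f_def D_def using r sp s4 by (auto intro!: f_nonneg)
  have fneg: "\<forall>x\<in>{-1..0}. f x \<le> 0"
  proof
    fix x :: real assume x: "x \<in> {-1..0}"
    have "f (-x) \<ge> 0" using fpos x by auto
    moreover have "f (-x) = - f x" unfolding f_def D_def by (rule f_odd[OF r])
    ultimately show "f x \<le> 0" by simp
  qed
  have main: "sup_norm (\<lambda>x. f x - poly P x) > A * sup_norm (D r)"
    if dP: "degree P \<le> n" and Pneg: "\<forall>x\<in>{-1..0}. poly P x \<le> 0" and Ppos: "\<forall>x\<in>{0..1}. poly P x \<ge> 0"
      and jet: "\<forall>i<r. poly ((pderiv ^^ i) P) 0 = D i 0" for P
  proof (rule ccontr)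
    assume "\<not> ?thesis"
    then have sn: "sup_norm (\<lambda>x. f x - poly P x) \<le> A * sup_norm (D r)" by simp
    have "sup_norm (D r) \<le> fact (r+1)" unfolding D_def using r sp by (intro sup_norm_le Dr_bound) auto
    then have "A * sup_norm (D r) \<le> A * fact (r+1)" using assms(4) by (intro mult_left_mono) auto
    with sn have sn2: "sup_norm (\<lambda>x. f x - poly P x) \<le> A * fact (r+1)" by simp
    have fc: "continuous_on {-1..1} f" using Cr unfolding Cr_derivs_def f_def by auto
    have cfp: "continuous_on {-1..1} (\<lambda>x. f x - poly P x)" by (intro continuous_intros fc)
    have "\<forall>t\<in>set ts. \<bar>poly P t\<bar> \<le> B0"
    proof
      fix t assume t: "t \<in> set ts"
      then have t1: "1/2 \<le> t" "t \<le> 1" using tsr by auto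
      have "\<bar>f t - poly P t\<bar> \<le> sup_norm (\<lambda>x. f x - poly P x)"
        using t1 by (intro sup_norm_ge[OF cfp]) auto
      moreover have "\<bar>f t\<bar> \<le> real r + 3" unfolding f_def D_def using node_bound[of r s t] r sp s4 t1 by simp
      ultimately show "\<bar>poly P t\<bar> \<le> B0" unfolding B0_def using sn2 by linarith
    qed
    then have cb: "\<And>i. \<bar>coeff P i\<bar> \<le> L" unfolding L_def using KR[of P B0] dP lts by auto
    define R where "R = P - Tp r s"
    have cR_low: "coeff R i = 0" if "i < r" for i
    proof -
      have "fact i * coeff P i = fact i * coeff (Tp r s) i"
        using jet that DD_at0[OF that sp] unfolding D_def by (simp add: higher_pderiv_at0)
      then show ?thesis unfolding R_def by simp
    qed
    have cR_high: "coeff R i = coeff P i" if "i \<ge> r" for i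
      unfolding R_def using coeff_Tp_high[of r i s] that r by simp
    have dR: "degree R \<le> n" unfolding R_def
      using degree_diff_le[OF dP order_trans[OF degree_Tp assms(3)]] .
    define x0 where "x0 = 2 * s"
    have x0: "0 < x0" "x0 \<le> 1" unfolding x0_def using sp s4 by auto
    have P1: "poly P x0 \<ge> 0" using Ppos x0 by auto
    have P2: "poly P (-x0) \<le> 0" using Pneg x0 by auto
    have Pdec: "poly P y = poly (Tp r s) y + poly R y" for y unfolding R_def by simp
    have "poly R x0 - poly R (-x0) = (\<Sum>i\<le>n. coeff R i * (x0^i - (-x0)^i))"
      unfolding poly_sum_n[OF dR] by (simp add: sum_subtractf algebra_simps)
    also have "\<dots> \<le> (\<Sum>i\<le>n. L * (2 * x0^(r+1)))"
    proof (rule sum_mono)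
      fix i assume "i \<in> {..n}"
      show "coeff R i * (x0^i - (-x0)^i) \<le> L * (2 * x0^(r+1))"
      proof (cases "i \<le> r")
        case True
        have z: "coeff R i * (x0^i - (-x0)^i) = 0"
        proof (cases "i = r")
          case True then show ?thesis using r by simp
        next
          case False then show ?thesis using \<open>i \<le> r\<close> cR_low by simp
        qed
        show ?thesis unfolding z using L0 x0 by simp
      next
        case False
        have "\<bar>x0^i - (-x0)^i\<bar> \<le> 2 * x0^i"
          using x0 by (simp add: power_minus' abs_triangle_ineq4) (cases "even i", auto)
        also have "\<dots> \<le> 2 * x0^(r+1)" using x0 False power_decreasing[of "r+1" i x0] by simp
        finally have h: "\<bar>x0^i - (-x0)^i\<bar> \<le> 2 * x0^(r+1)" .
        have "coeff R i * (x0^i - (-x0)^i) \<le> \<bar>coeff R i\<bar> * \<bar>x0^i - (-x0)^i\<bar>"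
          by (simp add: abs_mult[symmetric])
        also have "\<dots> \<le> L * (2 * x0^(r+1))"
          using cb[of i] cR_high[of i] False h by (intro mult_mono) auto
        finally show ?thesis .
      qed
    qed
    also have "\<dots> = (real n + 1) * L * 2 * x0^(r+1)" by simp
    finally have dRb: "poly R x0 - poly R (-x0) \<le> (real n + 1) * L * 2 * x0^(r+1)" .
    have "poly (Tp r s) (-x0) = - poly (Tp r s) x0" by (rule Tp_odd[OF r])
    then have "0 \<le> 2 * poly (Tp r s) x0 + (real n + 1) * L * 2 * x0^(r+1)"
      using P1 P2 dRb unfolding Pdec by linarith
    moreover define Y where "Y = x0^(r-3)"
    have Yp: "Y > 0" unfolding Y_def using x0 by simp
    have e1: "x0^(r-1) = Y * (4 * s^2)"
    proof -
      have "r - 1 = (r-3) + 2" using r by simp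
      then have "x0^(r-1) = x0^(r-3) * x0^2" by (metis power_add)
      moreover have "x0^2 = 4 * s^2" unfolding x0_def by (simp add: power_mult_distrib)
      ultimately show ?thesis unfolding Y_def by simp
    qed
    have e2: "x0^(r+1) = Y * (16 * s^4)"
    proof -
      have "r + 1 = (r-3) + 4" using r by simp
      then have "x0^(r+1) = x0^(r-3) * x0^4" by (metis power_add)
      moreover have "x0^4 = 16 * s^4" unfolding x0_def by (simp add: power_mult_distrib)
      ultimately show ?thesis unfolding Y_def by simp
    qed
    ultimately have "0 \<le> Y * (2 * s^3/2^r - 8 * s^3/2^r + (real n + 1) * L * 32 * s^4)"
      unfolding poly_Tp e1 e2 Y_def[symmetric] by (simp add: algebra_simps power2_eq_square power3_eq_cube)
    then have "0 \<le> 2 * s^3/2^r - 8 * s^3/2^r + (real n + 1) * L * 32 * s^4"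
      using Yp by (simp add: zero_le_mult_iff)
    then have "6 * s^3 / 2^r \<le> (real n + 1) * L * 32 * s^4" by simp
    then have "6 * s^3 \<le> 2^r * ((real n + 1) * L * 32 * s^4)" by (simp add: divide_simps mult.commute)
    then have "6 * s^3 \<le> s^3 * (2^(r+5) * (real n + 1) * L * s)"
      by (simp add: power_add algebra_simps power3_eq_cube power4_eq_xxxx)
    also have "\<dots> \<le> s^3 * 1" using key sp by (intro mult_left_mono) auto
    finally show False using sp by simp
  qed
  show ?thesis
    by (rule exI[of _ f], rule exI[of _ D]) (use Cr fpos fneg main in \<open>auto simp: f_def\<close>)
qed

end
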